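(* In the 2SDI setting where Alice measures the qubit observables $A_0=\sigma_x$, $A_1=\sigma_y$ and Bob and Charlie are black boxes, the Mermin family $P^V_{MF}$ demonstrates tripartite steering (i.e. admits no 2SDI fully LHS-LHV model) whenever $V>\frac12$.
   Context: Outcomes and settings: $a,b,c,x,y,z\in\{0,1\}$. For a qubit observable $O$ with eigenvalues $\pm1$, the measurement has projectors $M_0=(\mathbb 1+O)/2$, $M_1=(\mathbb 1-O)/2$; $M^A_{a|x}$ denotes the projectors of $A_x$. Mermin family ($0<V\le1$): $P^V_{MF}(abc|xyz)=\frac{1+(-1)^{a\oplus b\oplus c\oplus xy\oplus yz\oplus xz}\,\delta_{x\oplus y\oplus1,z}\,V}{8}$. 2SDI fully LHS-LHV model: there exist probabilities $q_\lambda$, qubit states $\rho^\lambda_A$ and arbitrary conditional distributions $P_\lambda(b|y)$, $P_\lambda(c|z)$ with $P(abc|xyz)=\sum_\lambda q_\lambda \mathrm{Tr}(M^A_{a|x}\rho^\lambda_A)P_\lambda(b|y)P_\lambda(c|z)$ for all $a,b,c,x,y,z$. A correlation demonstrates tripartite steering in the 2SDI scenario iff it admits no such model. *)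

theory Defs
  imports "HOL-Analysis.Analysis"
begin

type_synonym cmat2 = "complex^2^2"

definition mtrace :: "cmat2 \<Rightarrow> complex" where
  "mtrace M = (\<Sum>i\<in>UNIV. M $ i $ i)"

definition hermitian2 :: "cmat2 \<Rightarrow> bool" where
  "hermitian2 M \<longleftrightarrow> (\<forall>i j. M $ i $ j = cnj (M $ j $ i))"

definition psd2 :: "cmat2 \<Rightarrow> bool" where
  "psd2 M \<longleftrightarrow> (\<forall>v::complex^2. 0 \<le> Re (\<Sum>i\<in>UNIV. cnj (v $ i) * (M *v v) $ i))"

definition qubit_state :: "cmat2 \<Rightarrow> bool" where
  "qubit_state \<rho> \<longleftrightarrow> hermitian2 \<rho> \<and> psd2 \<rho> \<and> mtrace \<rho> = 1"

definition sigma_x :: cmat2 where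
  "sigma_x = (\<chi> i j. if i = j then 0 else 1)"

definition sigma_y :: cmat2 where
  "sigma_y = (\<chi> i j. if i = j then 0 else if i = 0 then - \<i> else \<i>)"

definition proj :: "cmat2 \<Rightarrow> nat \<Rightarrow> cmat2" where
  "proj Ob a = (if a = 0 then scaleR (1/2) (mat 1 + Ob) else scaleR (1/2) (mat 1 - Ob))"

definition alice_obs :: "nat \<Rightarrow> cmat2" where
  "alice_obs x = (if x = 0 then sigma_x else sigma_y)"

definition born :: "nat \<Rightarrow> nat \<Rightarrow> cmat2 \<Rightarrow> real" where
  "born a x \<rho> = Re (mtrace (proj (alice_obs x) a ** \<rho>))"

text \<open>Mermin family correlations, outcomes/settings in {0,1}.\<close>
definition P_MF :: "real \<Rightarrow> nat \<Rightarrow> nat \<Rightarrow> nat \<Rightarrow> nat \<Rightarrow> nat \<Rightarrow> nat \<Rightarrow> real" where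
  "P_MF V a b c x y z =
     (1 + (-1) ^ (a + b + c + x*y + y*z + x*z)
          * (if (x + y + 1) mod 2 = z then 1 else 0) * V) / 8"

definition cond_dist :: "(nat \<Rightarrow> nat \<Rightarrow> real) \<Rightarrow> bool" where
  "cond_dist P \<longleftrightarrow> (\<forall>b y. 0 \<le> P b y) \<and> (\<forall>y\<le>1. P 0 y + P 1 y = 1)"

text \<open>2SDI fully LHS-LHV model, with finitely many hidden variables \<lambda> < n.\<close>
definition has_2SDI_LHS_LHV :: "(nat \<Rightarrow> nat \<Rightarrow> nat \<Rightarrow> nat \<Rightarrow> nat \<Rightarrow> nat \<Rightarrow> real) \<Rightarrow> bool" where
  "has_2SDI_LHS_LHV P \<longleftrightarrow>
    (\<exists>(n::nat) (q::nat \<Rightarrow> real) (\<rho>::nat \<Rightarrow> cmat2)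
        (PB::nat \<Rightarrow> nat \<Rightarrow> nat \<Rightarrow> real) (PC::nat \<Rightarrow> nat \<Rightarrow> nat \<Rightarrow> real).
       (\<forall>l<n. 0 \<le> q l) \<and> (\<Sum>l<n. q l) = 1 \<and>
       (\<forall>l<n. qubit_state (\<rho> l) \<and> cond_dist (PB l) \<and> cond_dist (PC l)) \<and>
       (\<forall>a b c x y z. a \<le> 1 \<longrightarrow> b \<le> 1 \<longrightarrow> c \<le> 1 \<longrightarrow> x \<le> 1 \<longrightarrow> y \<le> 1 \<longrightarrow> z \<le> 1 \<longrightarrow>
          P a b c x y z = (\<Sum>l<n. q l * born a x (\<rho> l) * PB l b y * PC l c z)))"

end

theory Submission imports Defs begin

lemma two_facts: "(2::2) = 0" "(1::2) \<noteq> 0" "(1::2) \<noteq> 2" by simp_all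

lemma born_x: "born 0 0 r - born 1 0 r = Re (r$1$2 + r$2$1)"
  by (simp add: born_def proj_def alice_obs_def sigma_x_def mtrace_def sum_2 matrix_matrix_mult_def mat_def algebra_simps)

lemma born_y: "born 0 1 r - born 1 1 r = Re (\<i> * r$2$1 - \<i> * r$1$2)"
  by (simp add: born_def proj_def alice_obs_def sigma_y_def mtrace_def sum_2 matrix_matrix_mult_def mat_def algebra_simps)

lemma qubit_bound:
  assumes "qubit_state r"
  shows "(born 0 0 r - born 1 0 r)^2 + (born 0 1 r - born 1 1 r)^2 \<le> 1"
proof -
  define p where "p = r$1$1"
  define s where "s = r$2$2"
  define c where "c = r$1$2"
  have h: "hermitian2 r" "psd2 r" "mtrace r = 1" using assms by (auto simp: qubit_state_def)
  have c21: "r$2$1 = cnj c" using h(1) unfolding hermitian2_def c_def by metis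
  have pr: "Im p = 0" using h(1) unfolding hermitian2_def p_def by (metis cnj.simps(2) neg_equal_zero)
  have sr: "Im s = 0" using h(1) unfolding hermitian2_def s_def by (metis cnj.simps(2) neg_equal_zero)
  have tr: "Re p + Re s = 1" using arg_cong[where f=Re, OF h(3)] by (simp add: mtrace_def sum_2 p_def s_def)
  have q1: "0 \<le> Re (\<Sum>i\<in>UNIV. cnj ((vector [-c, p] :: complex^2) $ i) * (r *v vector [-c, p]) $ i)"
    using h(2) unfolding psd2_def by blast
  have q2: "0 \<le> Re (\<Sum>i\<in>UNIV. cnj ((vector [s, -cnj c] :: complex^2) $ i) * (r *v vector [s, -cnj c]) $ i)"
    using h(2) unfolding psd2_def by blast
  have f1: "(\<Sum>i\<in>UNIV. cnj ((vector [-c, p] :: complex^2) $ i) * (r *v vector [-c, p]) $ i)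
     = cnj (-c) * (p * (-c) + c * p) + cnj p * (cnj c * (-c) + s * p)"
    by (simp add: sum_2 matrix_vector_mult_def p_def[symmetric] s_def[symmetric] c_def[symmetric] c21)
  have f2: "(\<Sum>i\<in>UNIV. cnj ((vector [s, -cnj c] :: complex^2) $ i) * (r *v vector [s, -cnj c]) $ i)
     = cnj s * (p * s + c * (- cnj c)) + cnj (- cnj c) * (cnj c * s + s * (- cnj c))"
    by (simp add: sum_2 matrix_vector_mult_def p_def[symmetric] s_def[symmetric] c_def[symmetric] c21)
  have e1: "0 \<le> Re p * (Re p * Re s - (Re c)^2 - (Im c)^2)"
    using q1 pr sr unfolding f1 by (simp add: power2_eq_square algebra_simps)
  have e2: "0 \<le> Re s * (Re p * Re s - (Re c)^2 - (Im c)^2)"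
    using q2 pr sr unfolding f2 by (simp add: power2_eq_square algebra_simps)
  define X where "X = Re p * Re s - (Re c)^2 - (Im c)^2"
  have "0 \<le> (Re p + Re s) * X" using e1 e2 unfolding X_def[symmetric] by (simp add: distrib_right)
  hence e: "(Re c)^2 + (Im c)^2 \<le> Re p * Re s" using tr by (simp add: X_def)
  have "0 \<le> (Re p - Re s)^2" by simp
  hence "4 * (Re p * Re s) \<le> (Re p + Re s)^2" by (simp add: power2_eq_square algebra_simps)
  hence "4 * (Re p * Re s) \<le> 1" using tr by simp
  moreover have "(born 0 0 r - born 1 0 r)^2 + (born 0 1 r - born 1 1 r)^2 = 4 * ((Re c)^2 + (Im c)^2)"
  proof -
    have bx: "born 0 0 r - born 1 0 r = 2 * Re c" using born_x[of r] unfolding c_def[symmetric] c21 by simp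
    have by': "born 0 1 r - born 1 1 r = 2 * Im c" using born_y[of r] unfolding c_def[symmetric] c21 by simp
    show ?thesis unfolding bx by' by (simp add: power2_eq_square)
  qed
  ultimately show ?thesis using e by (metis (no_types, opaque_lifting) mult_left_mono order_trans zero_le_numeral)
qed

lemma expand8:
  fixes n :: nat shows "(\<Sum>l<n. q l * (a0 l - a1 l) * (b0 l - b1 l) * (c0 l - (c1 l::real))) =
   (\<Sum>l<n. q l * a0 l * b0 l * c0 l) - (\<Sum>l<n. q l * a0 l * b0 l * c1 l)
 - (\<Sum>l<n. q l * a0 l * b1 l * c0 l) + (\<Sum>l<n. q l * a0 l * b1 l * c1 l)
 - (\<Sum>l<n. q l * a1 l * b0 l * c0 l) + (\<Sum>l<n. q l * a1 l * b0 l * c1 l)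
 + (\<Sum>l<n. q l * a1 l * b1 l * c0 l) - (\<Sum>l<n. q l * a1 l * b1 l * c1 l)"
  by (induction n) (simp_all add: algebra_simps)

lemma local_bound:
  fixes a b B0 B1 C0 C1 :: real
  assumes "a^2 + b^2 \<le> 1" "\<bar>B0\<bar> \<le> 1" "\<bar>B1\<bar> \<le> 1" "\<bar>C0\<bar> \<le> 1" "\<bar>C1\<bar> \<le> 1"
  shows "a * B0 * C1 + a * B1 * C0 + b * B0 * C0 - b * B1 * C1 \<le> 2"
proof -
  define u where "u = B0 * C1 + B1 * C0"
  define w where "w = B0 * C0 - B1 * C1"
  have uw: "u^2 + w^2 = (B0^2 + B1^2) * (C0^2 + C1^2)"
    by (simp add: u_def w_def power2_eq_square algebra_simps)
  have "B0^2 \<le> 1" "B1^2 \<le> 1" "C0^2 \<le> 1" "C1^2 \<le> 1"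
    using assms by (simp_all add: abs_square_le_1)
  hence "(B0^2 + B1^2) * (C0^2 + C1^2) \<le> 2 * 2"
    by (intro mult_mono) auto
  hence h4: "u^2 + w^2 \<le> 4" using uw by simp
  have "0 \<le> (2*a - u)^2 + (2*b - w)^2" by simp
  hence "4 * (a * u + b * w) \<le> 4 * (a^2 + b^2) + (u^2 + w^2)"
    by (simp add: power2_eq_square algebra_simps)
  moreover have "4 * (a^2 + b^2) + (u^2 + w^2) \<le> 4 + 4" using h4 assms(1) by (intro add_mono) auto
  ultimately have "4 * (a * u + b * w) \<le> 8" by simp
  thus ?thesis by (simp add: u_def w_def algebra_simps)
qed

theorem proposition8:
  fixes V :: real
  assumes "0 < V" and "V \<le> 1" and "V > 1/2"
  shows "\<not> has_2SDI_LHS_LHV (P_MF V)"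
proof
  assume "has_2SDI_LHS_LHV (P_MF V)"
  then obtain n :: nat and q :: "nat \<Rightarrow> real" and \<rho> :: "nat \<Rightarrow> cmat2" and PB PC :: "nat \<Rightarrow> nat \<Rightarrow> nat \<Rightarrow> real" where
    qpos: "\<forall>l<n. 0 \<le> q l" and qsum: "(\<Sum>l<n. q l) = 1" and
    st: "\<forall>l<n. qubit_state (\<rho> l) \<and> cond_dist (PB l) \<and> cond_dist (PC l)" and
    mdl: "\<forall>a b c x y z. a \<le> 1 \<longrightarrow> b \<le> 1 \<longrightarrow> c \<le> 1 \<longrightarrow> x \<le> 1 \<longrightarrow> y \<le> 1 \<longrightarrow> z \<le> 1 \<longrightarrow>
          P_MF V a b c x y z = (\<Sum>l<n. q l * born a x (\<rho> l) * PB l b y * PC l c z)"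
    unfolding has_2SDI_LHS_LHV_def by blast
  define P where "P = P_MF V"
  define E where "E x y z = P 0 0 0 x y z - P 0 0 1 x y z - P 0 1 0 x y z + P 0 1 1 x y z
     - P 1 0 0 x y z + P 1 0 1 x y z + P 1 1 0 x y z - P 1 1 1 x y z" for x y z
  define A where "A l x = born 0 x (\<rho> l) - born 1 x (\<rho> l)" for l x
  define B where "B l y = PB l 0 y - PB l 1 y" for l y
  define C where "C l z = PC l 0 z - PC l 1 z" for l z
  have Ecorr: "E x y z = (\<Sum>l<n. q l * A l x * B l y * C l z)"
    if "x \<le> 1" "y \<le> 1" "z \<le> 1" for x y z
    unfolding A_def B_def C_def expand8 E_def P_def using mdl that by simp
  have Bb: "\<bar>B l y\<bar> \<le> 1" if "l < n" "y \<le> 1" for l y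
  proof -
    have "cond_dist (PB l)" using st that by blast
    hence "0 \<le> PB l 0 y" "0 \<le> PB l 1 y" "PB l 0 y + PB l 1 y = 1"
      using that unfolding cond_dist_def by auto
    thus ?thesis unfolding B_def by (simp add: abs_le_iff)
  qed
  have Cb: "\<bar>C l y\<bar> \<le> 1" if "l < n" "y \<le> 1" for l y
  proof -
    have "cond_dist (PC l)" using st that by blast
    hence "0 \<le> PC l 0 y" "0 \<le> PC l 1 y" "PC l 0 y + PC l 1 y = 1"
      using that unfolding cond_dist_def by auto
    thus ?thesis unfolding C_def by (simp add: abs_le_iff)
  qed
  have Ab: "(A l 0)^2 + (A l 1)^2 \<le> 1" if "l < n" for l
    using qubit_bound[of "\<rho> l"] st that unfolding A_def by blast
  have "E 0 0 1 + E 0 1 0 + E 1 0 0 - E 1 1 1 =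
     (\<Sum>l<n. q l * (A l 0 * B l 0 * C l 1 + A l 0 * B l 1 * C l 0 + A l 1 * B l 0 * C l 0 - A l 1 * B l 1 * C l 1))"
    by (simp add: Ecorr sum.distrib[symmetric] sum_subtractf[symmetric] algebra_simps)
  also have "\<dots> \<le> (\<Sum>l<n. q l * 2)"
  proof (rule sum_mono)
    fix l assume "l \<in> {..<n}"
    hence l: "l < n" by simp
    show "q l * (A l 0 * B l 0 * C l 1 + A l 0 * B l 1 * C l 0 + A l 1 * B l 0 * C l 0 - A l 1 * B l 1 * C l 1) \<le> q l * 2"
      using qpos l by (intro mult_left_mono local_bound Ab Bb Cb) auto
  qed
  also have "\<dots> = 2" using qsum by (simp add: sum_distrib_right[symmetric])
  finally have le2: "E 0 0 1 + E 0 1 0 + E 1 0 0 - E 1 1 1 \<le> 2" .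
  have "E 0 0 1 + E 0 1 0 + E 1 0 0 - E 1 1 1 = 4 * V"
    apply (simp add: E_def P_def P_MF_def)
    apply (simp add: field_simps)
    done
  thus False using le2 assms by linarith
qed

end
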